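(* Let $f(u,\bar u)=\sum_{\nu,\mu}c_{\nu,\mu}u^\nu\bar u^\mu$ be a mixed polynomial in one complex variable $u$. (1) If $f$ is admissible at infinity and its zero set $V(f)=\{\alpha\in\mathbb C: f(\alpha,\bar\alpha)=0\}$ is finite, then $\operatorname{SM}(f)=\beta(f)$. (2) If $f$ is admissible at the origin and $f(0,0)=0$, then $\operatorname{sm}(f,0)=\rho(f,0)$.
   Context: Let $\bar d=\max\{\nu+\mu: c_{\nu,\mu}\ne0\}$ and $\underline d=\min\{\nu+\mu:c_{\nu,\mu}\ne0\}$, and for $\ell\ge0$ let $f_\ell=\sum_{\nu+\mu=\ell}c_{\nu,\mu}u^\nu\bar u^\mu$. There are unique factorizations $f_{\bar d}(u,\bar u)=c\,u^p\bar u^q\prod_{j=1}^s(u+\gamma_j\bar u)^{\nu_j}$ with $c\ne0$, $p,q\ge0$, $\nu_j\ge1$, $p+q+\sum\nu_j=\bar d$, and $\gamma_1,\dots,\gamma_s$ distinct non-zero complex numbers; and $f_{\underline d}(u,\bar u)=c'u^{a}\bar u^{b}\prod_{j=1}^{s'}(u+\delta_j\bar u)^{\mu_j}$ with $c'\ne0$, $a+b+\sum\mu_j=\underline d$, $\delta_1,\dots,\delta_{s'}$ distinct non-zero complex numbers. $f$ is admissible at infinity if $|\gamma_j|\ne1$ for all $j$, and admissible at the origin if $|\delta_j|\ne1$ for all $j$. For non-zero $\xi\in\mathbb C$ let $\varepsilon(\xi)=1$ if $|\xi|<1$, $0$ if $|\xi|=1$, $-1$ if $|\xi|>1$. Define $\beta(f)=p-q+\sum_{j=1}^s\varepsilon(\gamma_j)\nu_j$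 and $\rho(f,0)=a-b+\sum_{j=1}^{s'}\varepsilon(\delta_j)\mu_j$. For an isolated root $\alpha$ of $f$, $\operatorname{sm}(f,\alpha)$ is the mapping degree of $f/|f|:\{|u-\alpha|=r\}\to S^1$ for small $r>0$ (circle oriented counterclockwise), and $\operatorname{SM}(f)=\sum_{\alpha\in V(f)}\operatorname{sm}(f,\alpha)$. *)

theory Defs
  imports "HOL-Complex_Analysis.Complex_Analysis"
begin

text \<open>A mixed polynomial f(u, conj u) = sum c_{nu,mu} u^nu (conj u)^mu is represented by
  its coefficient function c (with finite support).\<close>

definition mp_supp :: "(nat \<Rightarrow> nat \<Rightarrow> complex) \<Rightarrow> (nat \<times> nat) set" where
  "mp_supp c = {(n, m). c n m \<noteq> 0}"

definition mp_eval :: "(nat \<Rightarrow> nat \<Rightarrow> complex) \<Rightarrow> complex \<Rightarrow> complex \<Rightarrow> complex" where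
  "mp_eval c z w = (\<Sum>(n, m)\<in>mp_supp c. c n m * z ^ n * w ^ m)"

definition mp_fun :: "(nat \<Rightarrow> nat \<Rightarrow> complex) \<Rightarrow> complex \<Rightarrow> complex" where
  "mp_fun c u = mp_eval c u (cnj u)"

definition mp_hpart :: "(nat \<Rightarrow> nat \<Rightarrow> complex) \<Rightarrow> nat \<Rightarrow> complex \<Rightarrow> complex \<Rightarrow> complex" where
  "mp_hpart c l z w = (\<Sum>(n, m)\<in>{(n, m)\<in>mp_supp c. n + m = l}. c n m * z ^ n * w ^ m)"

definition top_deg :: "(nat \<Rightarrow> nat \<Rightarrow> complex) \<Rightarrow> nat" where
  "top_deg c = Max ((\<lambda>(n, m). n + m) ` mp_supp c)"

definition bot_deg :: "(nat \<Rightarrow> nat \<Rightarrow> complex) \<Rightarrow> nat" where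
  "bot_deg c = Min ((\<lambda>(n, m). n + m) ` mp_supp c)"

definition hfactorization ::
  "(nat \<Rightarrow> nat \<Rightarrow> complex) \<Rightarrow> nat \<Rightarrow> complex \<Rightarrow> nat \<Rightarrow> nat \<Rightarrow> complex list \<Rightarrow> nat list \<Rightarrow> bool" where
  "hfactorization c l c0 p q gs ks \<longleftrightarrow>
     c0 \<noteq> 0 \<and> length ks = length gs \<and> distinct gs \<and> (\<forall>g\<in>set gs. g \<noteq> 0) \<and>
     (\<forall>k\<in>set ks. k \<ge> 1) \<and> p + q + sum_list ks = l \<and>
     (\<forall>z w. mp_hpart c l z w = c0 * z ^ p * w ^ q * (\<Prod>j<length gs. (z + gs ! j * w) ^ (ks ! j)))"

definition eps_sign :: "complex \<Rightarrow> int" where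
  "eps_sign x = (if norm x < 1 then 1 else if norm x = 1 then 0 else -1)"

text \<open>p - q + sum_j eps(g_j) k_j; gives beta(f) for the top factorization, rho(f,0) for the bottom one.\<close>
definition fact_index :: "nat \<Rightarrow> nat \<Rightarrow> complex list \<Rightarrow> nat list \<Rightarrow> int" where
  "fact_index p q gs ks = int p - int q + (\<Sum>j<length gs. eps_sign (gs ! j) * int (ks ! j))"

definition mp_zeros :: "(nat \<Rightarrow> nat \<Rightarrow> complex) \<Rightarrow> complex set" where
  "mp_zeros c = {a. mp_fun c a = 0}"

text \<open>Local index sm(f, a): degree of f/|f| on the small counterclockwise circle |u - a| = r,
  i.e. the winding number around 0 of the image of that circle, for all small r > 0.\<close>
definition sm :: "(nat \<Rightarrow> nat \<Rightarrow> complex) \<Rightarrow> complex \<Rightarrow> int" where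
  "sm c a = (THE k::int. eventually (\<lambda>r. winding_number (mp_fun c \<circ> circlepath a r) 0 = of_int k) (at_right 0))"

definition SM :: "(nat \<Rightarrow> nat \<Rightarrow> complex) \<Rightarrow> int" where
  "SM c = (\<Sum>a\<in>mp_zeros c. sm c a)"

end

theory Submission imports Defs begin

definition W :: "(complex \<Rightarrow> complex) \<Rightarrow> complex \<Rightarrow> real \<Rightarrow> complex" where
  "W g c r = winding_number (g \<circ> circlepath c r) 0"

lemma path_W:
  assumes "continuous_on (sphere c r) g" "r \<ge> 0"
  shows "path (g \<circ> circlepath c r)"
  using assms by (intro path_continuous_image) auto

lemma notin_W:
  assumes "\<forall>x\<in>sphere c r. g x \<noteq> 0" "r \<ge> 0"
  shows "0 \<notin> path_image (g \<circ> circlepath c r)"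
  using assms by (auto simp: path_image_compose)

lemma loop_W: "pathfinish (g \<circ> circlepath c r) = pathstart (g \<circ> circlepath c r)"
  by (simp add: pathfinish_compose pathstart_compose)

lemma W_int:
  assumes "continuous_on (sphere c r) g" "r \<ge> 0" "\<forall>x\<in>sphere c r. g x \<noteq> 0"
  shows "W g c r \<in> \<int>"
  unfolding W_def using assms
  by (intro integer_winding_number path_W notin_W loop_W) auto

lemma hom_W:
  assumes "homotopic_loops S p q" "continuous_on S g" "\<forall>x\<in>S. g x \<noteq> 0"
  shows "winding_number (g \<circ> p) 0 = winding_number (g \<circ> q) 0"
proof -
  have "homotopic_loops (-{0}) (g \<circ> p) (g \<circ> q)"
    using assms by (intro homotopic_loops_continuous_image) auto
  then show ?thesis by (rule winding_number_homotopic_loops)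
qed

lemma disc_W:
  assumes "continuous_on (cball c r) g" "\<forall>x\<in>cball c r. g x \<noteq> 0" "r \<ge> 0"
  shows "W g c r = 0"
proof -
  have "homotopic_loops (cball c r) (circlepath c r) (\<lambda>t. c)"
  proof (rule homotopic_loops_linear)
    fix t :: real assume "t \<in> {0..1}"
    have "circlepath c r t \<in> cball c r"
      using assms(3) path_image_circlepath_nonneg[of r c] unfolding path_image_def
      by (metis atLeastAtMost_iff imageI sphere_cball subsetD \<open>t \<in> {0..1}\<close>)
    then show "closed_segment (circlepath c r t) c \<subseteq> cball c r"
      using assms(3) by (intro closed_segment_subset) auto
  qed (auto simp: pathstart_def pathfinish_def circlepath path_def intro!: continuous_intros)
  then have "winding_number (g \<circ> circlepath c r) 0 = winding_number (g \<circ> (\<lambda>t. c)) 0"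
    using assms by (intro hom_W) auto
  also have "\<dots> = 0" using assms by (simp add: o_def winding_number_zero_const)
  finally show ?thesis by (simp add: W_def)
qed

lemma annulus_W:
  assumes "continuous_on S g" "\<forall>x\<in>S. g x \<noteq> 0" "0 < r1" "r1 \<le> r2"
    and "\<And>x. r1 \<le> dist c x \<Longrightarrow> dist c x \<le> r2 \<Longrightarrow> x \<in> S"
  shows "W g c r1 = W g c r2"
proof -
  have "homotopic_loops S (circlepath c r1) (circlepath c r2)"
  proof (rule homotopic_loops_linear)
    fix t :: real assume "t \<in> {0..1}"
    show "closed_segment (circlepath c r1 t) (circlepath c r2 t) \<subseteq> S"
    proof
      fix x assume "x \<in> closed_segment (circlepath c r1 t) (circlepath c r2 t)"
      then obtain u where u: "0 \<le> u" "u \<le> 1"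
        and x: "x = (1 - u) *\<^sub>R circlepath c r1 t + u *\<^sub>R circlepath c r2 t"
        unfolding closed_segment_def by auto
      define e where "e = exp (2 * of_real pi * \<i> * of_real t)"
      have ne: "norm e = 1" unfolding e_def by (simp add: norm_exp_eq_Re)
      define \<rho> where "\<rho> = (1 - u) * r1 + u * r2"
      have "x - c = of_real \<rho> * e"
        unfolding x circlepath e_def \<rho>_def by (simp add: scaleR_conv_of_real algebra_simps)
      then have dx: "dist c x = \<bar>\<rho>\<bar>"
        by (metis dist_norm norm_minus_commute norm_mult ne norm_of_real mult.right_neutral)
      have "u * r1 \<le> u * r2" using u assms(3,4) by (intro mult_left_mono) auto
      moreover have "(1-u) * r1 \<le> (1-u) * r2" using u assms(3,4) by (intro mult_left_mono) auto
      ultimately have "r1 \<le> (1 - u) * r1 + u * r2" "(1 - u) * r1 + u * r2 \<le> r2"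
        by (auto simp: algebra_simps)
      then show "x \<in> S" using dx unfolding \<rho>_def using assms(3) by (intro assms(5)) auto
    qed
  qed (auto simp: pathstart_def pathfinish_def circlepath path_def intro!: continuous_intros)
  then show ?thesis unfolding W_def using assms by (intro hom_W) auto
qed

lemma prod_wind:
  assumes "path p" "path q" "0 \<notin> path_image p" "0 \<notin> path_image q"
  shows "winding_number (\<lambda>t. p t * q t) 0 = winding_number p 0 + winding_number q 0"
proof -
  obtain a where a: "path a" "pathfinish a - pathstart a = 2 * of_real pi * \<i> * winding_number p 0"
    "\<And>t. t \<in> {0..1} \<Longrightarrow> p t = 0 + exp (a t)"
    using winding_number_as_continuous_log[OF assms(1,3)] by blast
  obtain b where b: "path b" "pathfinish b - pathstart b = 2 * of_real pi * \<i> * winding_number q 0"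
    "\<And>t. t \<in> {0..1} \<Longrightarrow> q t = 0 + exp (b t)"
    using winding_number_as_continuous_log[OF assms(2,4)] by blast
  have "winding_number (\<lambda>t. p t * q t) 0 = winding_number (exp \<circ> (\<lambda>t. a t + b t)) 0"
    by (rule winding_number_cong) (simp add: a(3) b(3) exp_add)
  also have "\<dots> = ((pathfinish a - pathstart a) + (pathfinish b - pathstart b)) / (2 * of_real pi * \<i>)"
    using a(1) b(1) by (subst winding_number_compose_exp)
      (auto simp: path_add pathfinish_def pathstart_def algebra_simps)
  also have "\<dots> = winding_number p 0 + winding_number q 0"
    by (simp add: a(2) b(2) field_simps)
  finally show ?thesis .
qed

lemma prod_W:
  assumes "continuous_on (sphere c r) f" "continuous_on (sphere c r) g" "r \<ge> 0"
    "\<forall>x\<in>sphere c r. f x \<noteq> 0" "\<forall>x\<in>sphere c r. g x \<noteq> 0"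
  shows "W (\<lambda>x. f x * g x) c r = W f c r + W g c r"
proof -
  have "W (\<lambda>x. f x * g x) c r = winding_number (\<lambda>t. (f \<circ> circlepath c r) t * (g \<circ> circlepath c r) t) 0"
    by (simp add: W_def o_def)
  also have "\<dots> = W f c r + W g c r"
    unfolding W_def using assms by (intro prod_wind path_W notin_W) auto
  finally show ?thesis .
qed


lemma ext_W:
  assumes g: "continuous_on (sphere a r) g" "\<forall>x\<in>sphere a r. g x \<noteq> 0" and r: "r > 0" and w: "W g a r = 0"
  obtains h where "continuous_on (cball a r) h" "\<forall>x\<in>cball a r. h x \<noteq> 0" "\<forall>x\<in>sphere a r. h x = g x"
proof -
  let ?p = "g \<circ> circlepath a r"
  have "path ?p" "0 \<notin> path_image ?p" using g r by (intro path_W notin_W; simp)+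
  then obtain k where k: "homotopic_loops (-{0}) ?p (\<lambda>t. k)"
    using winding_number_homotopic_loops_null_eq w unfolding W_def by blast
  have hc: "homotopic_with_canon (\<lambda>h. True) (sphere 0 1) (-{0})
      (?p \<circ> (\<lambda>z. (Arg2pi z / (2 * pi)))) ((\<lambda>t. k) \<circ> (\<lambda>z. (Arg2pi z / (2 * pi))))"
    by (rule homotopic_loops_imp_homotopic_circlemaps[OF k])
  have eq: "(?p \<circ> (\<lambda>z. (Arg2pi z / (2 * pi)))) z = g (a + of_real r * z)" if "z \<in> sphere 0 1" for z
  proof -
    have "norm z = 1" using that by simp
    then have "exp (\<i> * of_real (Arg2pi z)) = z" by (simp add: complex_norm_eq_1_exp)
    moreover have "2 * of_real pi * \<i> * of_real (Arg2pi z / (2 * pi)) = \<i> * of_real (Arg2pi z)"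
      by (simp add: field_simps)
    ultimately show ?thesis by (simp add: circlepath)
  qed
  have "homotopic_with_canon (\<lambda>h. True) (sphere 0 1) (-{0}) (\<lambda>z. g (a + of_real r * z)) (\<lambda>z. k)"
    by (rule homotopic_with_eq[OF hc]) (auto simp: eq[symmetric])
  then obtain G where G: "continuous_on (cball 0 1) G" "G ` cball 0 1 \<subseteq> -{0}"
    "\<forall>x\<in>sphere 0 1. G x = g (a + of_real r * x)"
    using nullhomotopic_from_sphere_extension[of 0 1 "-{0}" "\<lambda>z. g (a + of_real r * z)"] by blast
  define h where "h x = G ((x - a) / of_real r)" for x
  have img: "(x - a) / of_real r \<in> cball 0 1" if "x \<in> cball a r" for x
    using that r by (auto simp: dist_norm norm_divide norm_minus_commute)
  show ?thesis
  proof
    show "continuous_on (cball a r) h" unfolding h_def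
      by (rule continuous_on_compose2[OF G(1)]) (use r in \<open>auto intro!: continuous_intros img\<close>)
    show "\<forall>x\<in>cball a r. h x \<noteq> 0" using G(2) img unfolding h_def by blast
    show "\<forall>x\<in>sphere a r. h x = g x"
    proof
      fix x assume x: "x \<in> sphere a r"
      then have "(x - a) / of_real r \<in> sphere 0 1"
        using r by (auto simp: dist_norm norm_divide norm_minus_commute)
      then show "h x = g x" using G(3) r unfolding h_def by simp
    qed
  qed
qed

definition lw :: "(complex \<Rightarrow> complex) \<Rightarrow> complex \<Rightarrow> int" where
  "lw g a = (THE k::int. eventually (\<lambda>r. winding_number (g \<circ> circlepath a r) 0 = of_int k) (at_right 0))"

lemma sm_lw: "sm c a = lw (mp_fun c) a"
  by (simp add: sm_def lw_def)

lemma lw_eqI: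
  assumes "r0 > 0" "\<And>r. 0 < r \<Longrightarrow> r \<le> r0 \<Longrightarrow> W g a r = of_int k"
  shows "lw g a = k"
proof -
  have ev: "eventually (\<lambda>r. winding_number (g \<circ> circlepath a r) 0 = of_int k) (at_right 0)"
    unfolding eventually_at_right_field using assms W_def
    by (intro exI[of _ r0]) auto
  show ?thesis unfolding lw_def
  proof (rule the_equality)
    fix j :: int assume "eventually (\<lambda>r. winding_number (g \<circ> circlepath a r) 0 = of_int j) (at_right 0)"
    with ev have "eventually (\<lambda>r::real. (of_int j :: complex) = of_int k) (at_right 0)"
      by eventually_elim auto
    then show "j = k" by (simp add: trivial_limit_at_right_real del: of_int_eq_iff) (simp)
  qed (rule ev)
qed

lemma lw_local:
  assumes "r1 > 0" "continuous_on (cball a r1 - {a}) g" "\<forall>x\<in>cball a r1 - {a}. g x \<noteq> 0"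
    "0 < r" "r \<le> r1"
  shows "W g a r = of_int (lw g a)"
proof -
  have sub: "sphere a r1 \<subseteq> cball a r1 - {a}" using assms by auto
  have "W g a r1 \<in> \<int>" using assms
    by (intro W_int) (auto intro: continuous_on_subset[OF _ sub])
  then obtain k where k: "W g a r1 = of_int k" by (auto elim: Ints_cases)
  have all: "W g a s = of_int k" if "0 < s" "s \<le> r1" for s
  proof -
    have "W g a s = W g a r1"
      using that assms(4,5) by (intro annulus_W[OF assms(2,3)]) (auto simp: dist_commute)
    then show ?thesis using k by simp
  qed
  then have "lw g a = k" using assms(1) by (intro lw_eqI) auto
  then show ?thesis using all assms by simp
qed


lemma W_cong:
  assumes "\<And>x. x \<in> sphere c r \<Longrightarrow> F x = G x" "r \<ge> 0"
  shows "W F c r = W G c r"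
  unfolding W_def
proof (rule winding_number_cong)
  fix t :: real assume "0 \<le> t" "t \<le> 1"
  then have "circlepath c r t \<in> path_image (circlepath c r)" unfolding path_image_def by auto
  then show "(F \<circ> circlepath c r) t = (G \<circ> circlepath c r) t" using assms by simp
qed

lemma small_cball:
  assumes "finite F" "b \<notin> F" "open U" "b \<in> U"
  obtains r where "r > 0" "cball b r \<subseteq> U" "cball b r \<inter> F = {}"
proof -
  have "open (U \<inter> -F)" using assms by (simp add: open_Int open_Compl finite_imp_closed)
  then obtain e where "e > 0" "cball b e \<subseteq> U \<inter> -F" using assms open_contains_cball by blast
  then show ?thesis using that by blast
qed

lemma W_pow:
  assumes "continuous_on (sphere c r) F" "\<forall>x\<in>sphere c r. F x \<noteq> 0" "r \<ge> 0"
  shows "W (\<lambda>x. F x ^ n) c r = of_nat n * W F c r"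
proof (induction n)
  case 0
  have "W (\<lambda>x. 1) c r = 0" unfolding W_def by (simp add: o_def winding_number_zero_const)
  then show ?case by simp
next
  case (Suc n)
  have "W (\<lambda>x. F x ^ Suc n) c r = W (\<lambda>x. F x * F x ^ n) c r" by simp
  also have "\<dots> = W F c r + W (\<lambda>x. F x ^ n) c r"
    using assms by (intro prod_W) (auto intro!: continuous_intros)
  finally show ?case using Suc by (simp add: algebra_simps)
qed

lemma W_lin:
  assumes "norm (a - c) < r"
  shows "W (\<lambda>x. x - a) c r = 1"
proof -
  have "W (\<lambda>x. x - a) c r = winding_number (\<lambda>t. circlepath c r t - a) 0"
    by (simp add: W_def o_def)
  also have "\<dots> = winding_number (circlepath c r) a" by (simp add: winding_number_offset[symmetric])
  also have "\<dots> = 1" using assms by (intro winding_number_circlepath)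
  finally show ?thesis .
qed

lemma W_cnjlin:
  assumes "norm (a - c) < r"
  shows "W (\<lambda>x. cnj (x - a)) c r = -1"
proof -
  have r: "r > 0" using assms by (meson norm_ge_zero le_less_trans)
  have p: "path (\<lambda>t. circlepath c r t - a)" by (intro path_continuous_image[of "circlepath c r" "\<lambda>x. x - a", unfolded o_def]) (auto intro!: continuous_intros)
  have n: "0 \<notin> path_image (\<lambda>t. circlepath c r t - a)"
  proof
    assume "0 \<in> path_image (\<lambda>t. circlepath c r t - a)"
    then obtain t where "t \<in> {0..1}" "circlepath c r t = a" unfolding path_image_def by auto
    then have "a \<in> path_image (circlepath c r)" unfolding path_image_def by auto
    then show False using assms r by (auto simp: dist_norm norm_minus_commute)
  qed
  have "W (\<lambda>x. cnj (x - a)) c r = winding_number (cnj \<circ> (\<lambda>t. circlepath c r t - a)) (cnj 0)"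
    by (simp add: W_def o_def)
  also have "\<dots> = - cnj (winding_number (\<lambda>t. circlepath c r t - a) 0)"
    by (rule winding_number_cnj[OF p n])
  also have "winding_number (\<lambda>t. circlepath c r t - a) 0 = 1"
    using W_lin[OF assms] by (simp add: W_def o_def)
  finally show ?thesis by simp
qed


definition Ek :: "complex \<Rightarrow> int \<Rightarrow> complex \<Rightarrow> complex" where
  "Ek a k x = (if 0 \<le> k then (x - a) ^ nat k else cnj (x - a) ^ nat (-k))"

lemma Ek_cont: "continuous_on S (Ek a k)"
  unfolding Ek_def by (cases "0 \<le> k") (auto intro!: continuous_intros)

lemma Ek_nz: "x \<noteq> a \<Longrightarrow> Ek a k x \<noteq> 0"
  unfolding Ek_def by auto

lemma W_Ek:
  assumes "norm (a - c) < r"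
  shows "W (Ek a k) c r = of_int k"
proof -
  have r: "r > 0" using assms by (meson norm_ge_zero le_less_trans)
  have nz: "\<forall>x\<in>sphere c r. x - a \<noteq> 0" "\<forall>x\<in>sphere c r. cnj (x - a) \<noteq> 0"
    using assms by (auto simp: dist_norm norm_minus_commute)
  show ?thesis
  proof (cases "0 \<le> k")
    case True
    then have "W (Ek a k) c r = W (\<lambda>x. (x - a) ^ nat k) c r"
      unfolding Ek_def by simp
    also have "\<dots> = of_nat (nat k) * W (\<lambda>x. x - a) c r"
      using nz r by (intro W_pow) (auto intro!: continuous_intros)
    finally show ?thesis using W_lin[OF assms] True by simp
  next
    case False
    then have "W (Ek a k) c r = W (\<lambda>x. cnj (x - a) ^ nat (-k)) c r"
      unfolding Ek_def by simp
    also have "\<dots> = of_nat (nat (-k)) * W (\<lambda>x. cnj (x - a)) c r"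
      using nz r by (intro W_pow) (auto intro!: continuous_intros)
    finally show ?thesis using W_cnjlin[OF assms] False by simp
  qed
qed

lemma main_lemma:
  assumes "finite Z"
  shows "continuous_on (-Z) g \<Longrightarrow> \<forall>x\<in>-Z. g x \<noteq> 0 \<Longrightarrow> Z \<subseteq> ball 0 R \<Longrightarrow> R > 0 \<Longrightarrow>
         W g 0 R = of_int (\<Sum>a\<in>Z. lw g a)"
  using assms
proof (induction Z arbitrary: g rule: finite_induct)
  case empty
  then show ?case by (simp, intro disc_W) (auto intro: continuous_on_subset)
next
  case (insert a Z')
  note cg = insert.prems(1) and ng = insert.prems(2) and ZR = insert.prems(3) and R = insert.prems(4)
  have aR: "a \<in> ball 0 R" using ZR by auto
  obtain r where r: "r > 0" "cball a r \<subseteq> ball 0 R" "cball a r \<inter> Z' = {}"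
    using small_cball[OF insert.hyps(1,2) _ aR] by auto
  define k where "k = lw g a"
  have sub_a: "cball a r - {a} \<subseteq> -insert a Z'" using r by auto
  have Wga: "W g a r = of_int k" unfolding k_def
    using r sub_a by (intro lw_local[of r]) (auto intro: continuous_on_subset[OF cg] simp: ng)
  define E where "E = Ek a k"
  have cE: "continuous_on S E" for S unfolding E_def by (rule Ek_cont)
  have nE: "x \<noteq> a \<Longrightarrow> E x \<noteq> 0" for x unfolding E_def by (rule Ek_nz)
  define g1 where "g1 x = g x / E x" for x
  have cg1: "continuous_on (-insert a Z') g1" unfolding g1_def
    using cg cE nE by (intro continuous_intros) auto
  have ng1: "\<forall>x\<in>-insert a Z'. g1 x \<noteq> 0" unfolding g1_def using ng nE by auto
  have gprod: "g x = g1 x * E x" if "x \<noteq> a" for x unfolding g1_def using nE[OF that] by simp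
  have sph_a: "sphere a r \<subseteq> -insert a Z'" using r by auto
  have "W g a r = W (\<lambda>x. g1 x * E x) a r"
    using r gprod by (intro W_cong) auto
  also have "\<dots> = W g1 a r + W E a r"
    using r sph_a ng1 nE by (intro prod_W continuous_on_subset[OF cg1] cE) auto
  finally have W1: "W g1 a r = 0" using Wga W_Ek[of a a r k] r unfolding E_def by simp
  obtain h where h: "continuous_on (cball a r) h" "\<forall>x\<in>cball a r. h x \<noteq> 0"
    "\<forall>x\<in>sphere a r. h x = g1 x"
  proof (rule ext_W[of a r g1])
    show "\<forall>x\<in>sphere a r. g1 x \<noteq> 0" using sph_a ng1 by blast
  qed (use r continuous_on_subset[OF cg1 sph_a] W1 in auto)
  define g2 where "g2 x = (if x \<in> ball a r then h x else g1 x)" for x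
  have U: "-Z' = cball a r \<union> (-Z' - ball a r)" using r by auto
  have cg2: "continuous_on (-Z') g2"
  proof -
    have "continuous_on (cball a r \<union> (-Z' - ball a r)) g2" unfolding g2_def
    proof (rule continuous_on_cases_local)
      show "closedin (top_of_set (cball a r \<union> (- Z' - ball a r))) (cball a r)"
        by (simp add: closed_subset)
      have "- Z' - ball a r = (cball a r \<union> (- Z' - ball a r)) \<inter> - ball a r" using r by auto
      then show "closedin (top_of_set (cball a r \<union> (- Z' - ball a r))) (- Z' - ball a r)"
        by (metis closedin_closed_Int open_ball closed_Compl)
      show "continuous_on (cball a r) h" by (rule h(1))
      show "continuous_on (- Z' - ball a r) g1"
        using r by (intro continuous_on_subset[OF cg1]) auto
      show "h x = g1 x" if "x \<in> cball a r \<and> x \<notin> ball a r \<or> x \<in> - Z' - ball a r \<and> x \<in> ball a r" for x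
        using that h(3) by auto
    qed
    then show ?thesis using U by simp
  qed
  have ng2: "\<forall>x\<in>-Z'. g2 x \<noteq> 0" unfolding g2_def using h(2) ng1 r by auto
  have IH: "W g2 0 R = of_int (\<Sum>b\<in>Z'. lw g2 b)"
    using insert.IH[OF cg2 ng2] ZR R by auto
  have sphR: "x \<notin> ball a r" if "x \<in> sphere 0 R" for x
  proof
    assume "x \<in> ball a r"
    then have "x \<in> ball 0 R" using r(2) ball_subset_cball by blast
    then show False using that by simp
  qed
  have sphR2: "sphere 0 R \<subseteq> -insert a Z'" using ZR by auto
  have "W g2 0 R = W g1 0 R" unfolding g2_def using R sphR by (intro W_cong) auto
  have "W g 0 R = W (\<lambda>x. g1 x * E x) 0 R"
    using R aR by (intro W_cong gprod) auto
  also have "\<dots> = W g1 0 R + W E 0 R"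
    using R sphR2 ng1 nE aR by (intro prod_W continuous_on_subset[OF cg1] cE) auto
  also have "W E 0 R = of_int k" unfolding E_def using aR by (intro W_Ek) auto
  finally have WgR: "W g 0 R = W g2 0 R + of_int k" using \<open>W g2 0 R = W g1 0 R\<close> by simp
  have lweq: "lw g2 b = lw g b" if b: "b \<in> Z'" for b
  proof -
    have bF: "b \<notin> insert a Z' - {b}" by simp
    have bU: "b \<in> - cball a r" using r b by auto
    obtain \<rho> where \<rho>: "\<rho> > 0" "cball b \<rho> \<subseteq> - cball a r" "cball b \<rho> \<inter> (insert a Z' - {b}) = {}"
      using small_cball[OF _ bF _ bU] insert.hyps(1) by auto
    have sub_b: "cball b \<rho> - {b} \<subseteq> -insert a Z'" using \<rho> by auto
    have "W g2 b s = of_int (lw g b)" if s: "0 < s" "s \<le> \<rho>" for s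
    proof -
      have "W g2 b s = W g1 b s" unfolding g2_def using \<rho> s
        by (intro W_cong) (auto simp: subset_iff)
      moreover have "W g b s = W (\<lambda>x. g1 x * E x) b s"
        using s \<rho> r by (intro W_cong gprod) (auto simp: subset_iff)
      moreover have "W (\<lambda>x. g1 x * E x) b s = W g1 b s + W E b s"
        using s sub_b ng1 nE \<rho>
        by (intro prod_W continuous_on_subset[OF cg1] cE) (auto simp: subset_iff)
      moreover have "W E b s = 0"
      proof -
        have "a \<notin> cball b \<rho>" using \<rho>(2) r by auto
        then show ?thesis using s by (intro disc_W cE ballI nE) auto
      qed
      moreover have "W g b s = of_int (lw g b)"
      proof (rule lw_local[of \<rho>])
        show "\<forall>x\<in>cball b \<rho> - {b}. g x \<noteq> 0" using ng sub_b by blast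
      qed (use \<rho> s continuous_on_subset[OF cg sub_b] in auto)
      ultimately show ?thesis by simp
    qed
    then show ?thesis using \<rho>(1) by (intro lw_eqI) auto
  qed
  have "W g 0 R = of_int (\<Sum>b\<in>Z'. lw g b) + of_int k"
    using WgR IH lweq by simp
  then show ?case using insert.hyps by (simp add: k_def add.commute)
qed


definition Fh :: "complex \<Rightarrow> nat \<Rightarrow> nat \<Rightarrow> complex list \<Rightarrow> nat list \<Rightarrow> complex \<Rightarrow> complex" where
  "Fh c0 p q gs ks u = c0 * u ^ p * cnj u ^ q * (\<Prod>j<length gs. (u + gs ! j * cnj u) ^ (ks ! j))"

lemma Fh_cont: "continuous_on S (Fh c0 p q gs ks)"
  unfolding Fh_def by (intro continuous_intros)

lemma hfact_eq: "hfactorization c l c0 p q gs ks \<Longrightarrow> mp_hpart c l u (cnj u) = Fh c0 p q gs ks u"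
  unfolding hfactorization_def Fh_def by auto

lemma lin_lower: "norm (u + g * cnj u) \<ge> \<bar>1 - norm g\<bar> * norm u"
proof -
  have "\<bar>norm u - norm (- (g * cnj u))\<bar> \<le> norm (u - - (g * cnj u))" by (rule norm_triangle_ineq3)
  moreover have "norm (- (g * cnj u)) = norm g * norm u" by (simp add: norm_mult)
  moreover have "\<bar>norm u - norm g * norm u\<bar> = \<bar>1 - norm g\<bar> * norm u"
  proof -
    have "norm u - norm g * norm u = (1 - norm g) * norm u" by (simp add: algebra_simps)
    then show ?thesis by (simp add: abs_mult)
  qed
  ultimately show ?thesis by simp
qed

lemma Fh_lower:
  assumes "hfactorization c l c0 p q gs ks" "\<forall>g\<in>set gs. norm g \<noteq> 1"
  shows "\<exists>K>0. \<forall>u. norm (Fh c0 p q gs ks u) \<ge> K * norm u ^ l"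
proof -
  note h = assms(1)[unfolded hfactorization_def]
  define n where "n = length gs"
  define K where "K = norm c0 * (\<Prod>j<n. \<bar>1 - norm (gs ! j)\<bar> ^ (ks ! j))"
  have pos: "\<bar>1 - norm (gs ! j)\<bar> > 0" if "j < n" for j
    using assms(2) that unfolding n_def by (auto simp: nth_mem)
  have K: "K > 0" unfolding K_def using h pos by (intro mult_pos_pos prod_pos) auto
  have sl: "sum_list ks = (\<Sum>j<n. ks ! j)"
    using h unfolding n_def by (simp add: sum_list_sum_nth lessThan_atLeast0)
  have "K * norm u ^ l \<le> norm (Fh c0 p q gs ks u)" for u
  proof -
    have "norm (Fh c0 p q gs ks u) = norm c0 * norm u ^ p * norm u ^ q *
            (\<Prod>j<n. norm (u + gs ! j * cnj u) ^ (ks ! j))"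
      unfolding Fh_def n_def by (simp add: norm_mult norm_power prod_norm[symmetric])
    moreover have "(\<Prod>j<n. (\<bar>1 - norm (gs ! j)\<bar> * norm u) ^ (ks ! j)) \<le>
                   (\<Prod>j<n. norm (u + gs ! j * cnj u) ^ (ks ! j))"
      by (intro prod_mono conjI power_mono lin_lower) auto
    moreover have "(\<Prod>j<n. (\<bar>1 - norm (gs ! j)\<bar> * norm u) ^ (ks ! j)) =
        (\<Prod>j<n. \<bar>1 - norm (gs ! j)\<bar> ^ (ks ! j)) * norm u ^ (\<Sum>j<n. ks ! j)"
      by (simp add: power_mult_distrib prod.distrib power_sum)
    moreover have "norm u ^ l = norm u ^ p * norm u ^ q * norm u ^ (\<Sum>j<n. ks ! j)"
      using h sl by (simp add: power_add[symmetric])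
    ultimately show ?thesis unfolding K_def
      by (simp add: mult_left_mono mult.assoc mult.left_commute)
  qed
  then show ?thesis using K by blast
qed


lemma W_near:
  assumes "continuous_on (sphere c r) F" "continuous_on (sphere c r) G" "r \<ge> 0"
    "\<And>x. x \<in> sphere c r \<Longrightarrow> norm (G x - F x) < norm (F x)"
  shows "W G c r = W F c r"
  unfolding W_def
proof (rule winding_number_nearby_loops_eq)
  show "path (F \<circ> circlepath c r)" "path (G \<circ> circlepath c r)" using assms by (auto intro: path_W)
  fix t :: real assume "t \<in> {0..1}"
  then have "circlepath c r t \<in> path_image (circlepath c r)" unfolding path_image_def by auto
  then show "norm ((G \<circ> circlepath c r) t - (F \<circ> circlepath c r) t) < norm ((F \<circ> circlepath c r) t - 0)"
    using assms by simp
qed (auto simp: loop_W)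

lemma W_const: "a \<noteq> 0 \<Longrightarrow> W (\<lambda>x. a) c r = 0"
  unfolding W_def by (simp add: o_def winding_number_zero_const)

lemma W_id: "s > 0 \<Longrightarrow> W (\<lambda>u. u) 0 s = 1"
  using W_lin[of 0 0 s] by simp

lemma W_cnj: "s > 0 \<Longrightarrow> W (\<lambda>u. cnj u) 0 s = -1"
  using W_cnjlin[of 0 0 s] by simp

lemma W_linf:
  assumes "norm g \<noteq> 1" "s > 0"
  shows "W (\<lambda>u. u + g * cnj u) 0 s = of_int (eps_sign g)"
proof (cases "norm g < 1")
  case True
  have "W (\<lambda>u. u + g * cnj u) 0 s = W (\<lambda>u. u) 0 s"
  proof (rule W_near)
    fix x :: complex assume "x \<in> sphere 0 s"
    then have "norm x = s" by simp
    then show "norm (x + g * cnj x - x) < norm x"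
      using True assms(2) by (simp add: norm_mult)
  qed (use assms in \<open>auto intro!: continuous_intros\<close>)
  then show ?thesis using True W_id[OF assms(2)] by (simp add: eps_sign_def)
next
  case False
  then have g: "norm g > 1" using assms by simp
  then have g0: "g \<noteq> 0" by auto
  have "W (\<lambda>u. u + g * cnj u) 0 s = W (\<lambda>u. g * cnj u) 0 s"
  proof (rule W_near)
    fix x :: complex assume "x \<in> sphere 0 s"
    then have "norm x = s" by simp
    then show "norm (x + g * cnj x - g * cnj x) < norm (g * cnj x)"
      using g assms(2) by (simp add: norm_mult)
  qed (use assms in \<open>auto intro!: continuous_intros\<close>)
  also have "\<dots> = W (\<lambda>u. g) 0 s + W (\<lambda>u. cnj u) 0 s"
    using assms g0 by (intro prod_W) (auto intro!: continuous_intros)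
  finally show ?thesis using False g W_cnj[OF assms(2)] W_const[OF g0] by (simp add: eps_sign_def)
qed

lemma W_prodset:
  fixes n :: nat
  assumes "\<And>j. j < n \<Longrightarrow> continuous_on (sphere c r) (T j)"
    "\<And>j x. j < n \<Longrightarrow> x \<in> sphere c r \<Longrightarrow> T j x \<noteq> 0" "r \<ge> 0"
  shows "W (\<lambda>u. \<Prod>j<n. T j u) c r = (\<Sum>j<n. W (T j) c r)"
  using assms
proof (induction n)
  case 0
  then show ?case using W_const[of 1] by simp
next
  case (Suc n)
  have "W (\<lambda>u. \<Prod>j<Suc n. T j u) c r = W (\<lambda>u. (\<Prod>j<n. T j u) * T n u) c r" by simp
  also have "\<dots> = W (\<lambda>u. \<Prod>j<n. T j u) c r + W (T n) c r"
    using Suc.prems by (intro prod_W continuous_on_prod) auto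
  finally show ?case using Suc by simp
qed

lemma W_Fh:
  assumes "c0 \<noteq> 0" "\<forall>g\<in>set gs. norm g \<noteq> 1" "s > 0"
  shows "W (Fh c0 p q gs ks) 0 s = of_int (fact_index p q gs ks)"
proof -
  let ?n = "length gs"
  have lnz: "u + gs ! j * cnj u \<noteq> 0" if "j < ?n" "u \<in> sphere 0 s" for j u
  proof -
    have "\<bar>1 - norm (gs ! j)\<bar> * norm u > 0" using that assms by (auto simp: nth_mem)
    then show ?thesis using lin_lower[of "gs ! j" u] by auto
  qed
  have s0: "\<And>u. u \<in> sphere 0 s \<Longrightarrow> u \<noteq> 0" using assms by auto
  have cP: "continuous_on (sphere 0 s) (\<lambda>u. \<Prod>j<?n. (u + gs ! j * cnj u) ^ (ks ! j))"
    by (intro continuous_intros)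
  have nP: "\<forall>u\<in>sphere 0 s. (\<Prod>j<?n. (u + gs ! j * cnj u) ^ (ks ! j)) \<noteq> 0"
    using lnz by auto
  have "W (Fh c0 p q gs ks) 0 s = W (\<lambda>u. c0 * u ^ p * cnj u ^ q) 0 s +
          W (\<lambda>u. \<Prod>j<?n. (u + gs ! j * cnj u) ^ (ks ! j)) 0 s"
    unfolding Fh_def using assms s0 nP cP by (intro prod_W) (auto intro!: continuous_intros)
  also have "W (\<lambda>u. c0 * u ^ p * cnj u ^ q) 0 s = W (\<lambda>u. c0 * u ^ p) 0 s + W (\<lambda>u. cnj u ^ q) 0 s"
    using assms s0 by (intro prod_W) (auto intro!: continuous_intros)
  also have "W (\<lambda>u. c0 * u ^ p) 0 s = W (\<lambda>u. c0) 0 s + W (\<lambda>u. u ^ p) 0 s"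
    using assms s0 by (intro prod_W) (auto intro!: continuous_intros)
  also have "W (\<lambda>u. u ^ p) 0 s = of_nat p"
  proof -
    have "W (\<lambda>u. u ^ p) 0 s = of_nat p * W (\<lambda>u. u) 0 s"
      by (rule W_pow) (use s0 assms in \<open>auto intro!: continuous_intros\<close>)
    then show ?thesis using W_id[OF assms(3)] by simp
  qed
  also have "W (\<lambda>u. cnj u ^ q) 0 s = - of_nat q"
  proof -
    have "W (\<lambda>u. cnj u ^ q) 0 s = of_nat q * W (\<lambda>u. cnj u) 0 s"
      by (rule W_pow) (use s0 assms in \<open>auto intro!: continuous_intros\<close>)
    then show ?thesis using W_cnj[OF assms(3)] by simp
  qed
  also have "W (\<lambda>u. \<Prod>j<?n. (u + gs ! j * cnj u) ^ (ks ! j)) 0 s =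
             (\<Sum>j<?n. W (\<lambda>u. (u + gs ! j * cnj u) ^ (ks ! j)) 0 s)"
    using assms lnz by (intro W_prodset) (auto intro!: continuous_intros)
  also have "\<dots> = (\<Sum>j<?n. of_nat (ks ! j) * of_int (eps_sign (gs ! j)))"
  proof (rule sum.cong[OF refl])
    fix j assume "j \<in> {..<?n}"
    then have j: "j < ?n" by simp
    have "W (\<lambda>u. (u + gs ! j * cnj u) ^ (ks ! j)) 0 s = of_nat (ks ! j) * W (\<lambda>u. u + gs ! j * cnj u) 0 s"
      using lnz[OF j] assms by (intro W_pow) (auto intro!: continuous_intros)
    also have "\<dots> = of_nat (ks ! j) * of_int (eps_sign (gs ! j))"
      using W_linf[of "gs ! j" s] assms j by (simp add: nth_mem)
    finally show "W (\<lambda>u. (u + gs ! j * cnj u) ^ (ks ! j)) 0 s = of_nat (ks ! j) * of_int (eps_sign (gs ! j))" .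
  qed
  finally show ?thesis using W_const[OF assms(1)] unfolding fact_index_def
    by (simp add: mult.commute)
qed


lemma mp_fun_cont: "continuous_on S (mp_fun c)"
  unfolding mp_fun_def mp_eval_def
  by (intro continuous_on_sum) (auto simp: split_def intro!: continuous_intros)

definition rest :: "(nat \<Rightarrow> nat \<Rightarrow> complex) \<Rightarrow> nat \<Rightarrow> complex \<Rightarrow> complex" where
  "rest c l u = (\<Sum>(n, m)\<in>{(n, m)\<in>mp_supp c. n + m \<noteq> l}. c n m * u ^ n * cnj u ^ m)"

lemma mp_split:
  assumes "finite (mp_supp c)"
  shows "mp_fun c u = mp_hpart c l u (cnj u) + rest c l u"
proof -
  let ?A = "{(n, m)\<in>mp_supp c. n + m = l}" and ?B = "{(n, m)\<in>mp_supp c. n + m \<noteq> l}"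
  have e: "mp_supp c = ?A \<union> ?B" by auto
  have "mp_fun c u = (\<Sum>(n, m)\<in>?A \<union> ?B. c n m * u ^ n * cnj u ^ m)"
    unfolding mp_fun_def mp_eval_def using e by simp
  also have "\<dots> = (\<Sum>(n, m)\<in>?A. c n m * u ^ n * cnj u ^ m) + (\<Sum>(n, m)\<in>?B. c n m * u ^ n * cnj u ^ m)"
    by (rule sum.union_disjoint) (use assms in \<open>auto intro: finite_subset\<close>)
  finally show ?thesis unfolding mp_hpart_def rest_def .
qed

definition MM :: "(nat \<Rightarrow> nat \<Rightarrow> complex) \<Rightarrow> real" where
  "MM c = (\<Sum>(n, m)\<in>mp_supp c. norm (c n m))"

lemma MM_nonneg: "MM c \<ge> 0"
  unfolding MM_def by (intro sum_nonneg) (auto simp: split_def)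

lemma rest_norm:
  assumes "finite (mp_supp c)"
  shows "norm (rest c l u) \<le> (\<Sum>(n, m)\<in>{(n, m)\<in>mp_supp c. n + m \<noteq> l}. norm (c n m) * norm u ^ (n + m))"
  unfolding rest_def
  by (rule order.trans[OF norm_sum]) (auto simp: split_def norm_mult norm_power power_add intro!: sum_mono)

lemma rest_top:
  assumes "finite (mp_supp c)" "norm u \<ge> 1"
  shows "norm (rest c (top_deg c) u) * norm u \<le> MM c * norm u ^ top_deg c"
proof -
  let ?B = "{(n, m)\<in>mp_supp c. n + m \<noteq> top_deg c}"
  have le: "n + m \<le> top_deg c" if "(n, m) \<in> mp_supp c" for n m
    unfolding top_deg_def using assms(1) that by (intro Max_ge) force+
  have "norm (rest c (top_deg c) u) * norm u \<le>
        (\<Sum>(n, m)\<in>?B. norm (c n m) * norm u ^ (n + m)) * norm u"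
    using rest_norm[OF assms(1)] by (intro mult_right_mono) auto
  also have "\<dots> = (\<Sum>(n, m)\<in>?B. norm (c n m) * norm u ^ (n + m + 1))"
    by (simp add: sum_distrib_right sum_distrib_left split_def mult_ac)
  also have "\<dots> \<le> (\<Sum>(n, m)\<in>?B. norm (c n m) * norm u ^ top_deg c)"
  proof (rule sum_mono)
    fix x assume "x \<in> ?B"
    then obtain n m where x: "x = (n, m)" "(n, m) \<in> mp_supp c" "n + m \<noteq> top_deg c" by auto
    then have "n + m + 1 \<le> top_deg c" using le by force
    then have "norm u ^ (n + m + 1) \<le> norm u ^ top_deg c" using assms(2) by (intro power_increasing) auto
    then show "(case x of (n, m) \<Rightarrow> norm (c n m) * norm u ^ (n + m + 1)) \<le>
               (case x of (n, m) \<Rightarrow> norm (c n m) * norm u ^ top_deg c)"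
      using x by (simp add: mult_left_mono)
  qed
  also have "\<dots> \<le> (\<Sum>(n, m)\<in>mp_supp c. norm (c n m) * norm u ^ top_deg c)"
    by (rule sum_mono2) (use assms(1) in \<open>auto simp: split_def\<close>)
  also have "\<dots> = MM c * norm u ^ top_deg c"
    unfolding MM_def by (simp add: sum_distrib_right split_def)
  finally show ?thesis .
qed

lemma rest_bot:
  assumes "finite (mp_supp c)" "norm u \<le> 1"
  shows "norm (rest c (bot_deg c) u) \<le> MM c * norm u ^ (bot_deg c + 1)"
proof -
  let ?B = "{(n, m)\<in>mp_supp c. n + m \<noteq> bot_deg c}"
  have le: "bot_deg c \<le> n + m" if "(n, m) \<in> mp_supp c" for n m
    unfolding bot_deg_def using assms(1) that by (intro Min_le) force+
  have "norm (rest c (bot_deg c) u) \<le> (\<Sum>(n, m)\<in>?B. norm (c n m) * norm u ^ (n + m))"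
    using rest_norm[OF assms(1)] .
  also have "\<dots> \<le> (\<Sum>(n, m)\<in>?B. norm (c n m) * norm u ^ (bot_deg c + 1))"
  proof (rule sum_mono)
    fix x assume "x \<in> ?B"
    then obtain n m where x: "x = (n, m)" "(n, m) \<in> mp_supp c" "n + m \<noteq> bot_deg c" by auto
    then have "bot_deg c + 1 \<le> n + m" using le by force
    then have "norm u ^ (n + m) \<le> norm u ^ (bot_deg c + 1)" using assms(2) by (intro power_decreasing) auto
    then show "(case x of (n, m) \<Rightarrow> norm (c n m) * norm u ^ (n + m)) \<le>
               (case x of (n, m) \<Rightarrow> norm (c n m) * norm u ^ (bot_deg c + 1))"
      using x by (simp add: mult_left_mono)
  qed
  also have "\<dots> \<le> (\<Sum>(n, m)\<in>mp_supp c. norm (c n m) * norm u ^ (bot_deg c + 1))"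
    by (rule sum_mono2) (use assms(1) in \<open>auto simp: split_def\<close>)
  also have "\<dots> = MM c * norm u ^ (bot_deg c + 1)"
    unfolding MM_def by (simp add: sum_distrib_right split_def)
  finally show ?thesis .
qed


lemma part1:
  assumes fin: "finite (mp_supp c)" and hf: "hfactorization c (top_deg c) c0 p q gs ks"
    and adm: "\<forall>g\<in>set gs. norm g \<noteq> 1" and fz: "finite (mp_zeros c)"
  shows "SM c = fact_index p q gs ks"
proof -
  define d where "d = top_deg c"
  define F where "F = Fh c0 p q gs ks"
  have c0: "c0 \<noteq> 0" using hf by (simp add: hfactorization_def)
  obtain K where K: "K > 0" "\<And>u. norm (F u) \<ge> K * norm u ^ d"
    using Fh_lower[OF hf adm] unfolding F_def d_def by blast
  define M where "M = MM c"
  have M: "M \<ge> 0" unfolding M_def by (rule MM_nonneg)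
  define R where "R = 1 + M / K"
  have R1: "R \<ge> 1" unfolding R_def using M K by simp
  have fsplit: "mp_fun c u = F u + rest c d u" for u
    using mp_split[OF fin, of u d] hfact_eq[OF hf, of u] unfolding F_def d_def by simp
  have dom: "norm (rest c d u) < norm (F u)" if u: "norm u \<ge> R" for u
  proof -
    let ?r = "norm u"
    have r1: "?r \<ge> 1" using u R1 by simp
    have "M < K * R" unfolding R_def using K M by (simp add: field_simps)
    also have "\<dots> \<le> K * ?r" using K u by simp
    finally have MK: "M < K * ?r" .
    have pos: "?r ^ d > 0" using r1 by (intro zero_less_power) linarith
    have "norm (rest c d u) * ?r \<le> M * ?r ^ d"
      using rest_top[OF fin r1] unfolding M_def d_def .
    also have "\<dots> < (K * ?r) * ?r ^ d" using MK pos by (intro mult_strict_right_mono)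
    finally have "norm (rest c d u) * ?r < (K * ?r ^ d) * ?r" by (simp add: mult_ac)
    then have "norm (rest c d u) < K * ?r ^ d" using r1 by (simp add: mult_less_cancel_right)
    also have "\<dots> \<le> norm (F u)" by (rule K(2))
    finally show ?thesis .
  qed
  have nz: "mp_fun c u \<noteq> 0" if "norm u \<ge> R" for u
  proof
    assume "mp_fun c u = 0"
    then have "F u = - rest c d u" using fsplit[of u] by (simp add: eq_neg_iff_add_eq_0)
    then show False using dom[OF that] by simp
  qed
  have Zsub: "mp_zeros c \<subseteq> ball 0 R"
    using nz by (force simp: mp_zeros_def not_le[symmetric])
  have "W (mp_fun c) 0 R = of_int (\<Sum>a\<in>mp_zeros c. lw (mp_fun c) a)"
    using fz Zsub R1 by (intro main_lemma mp_fun_cont) (auto simp: mp_zeros_def)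
  also have "(\<Sum>a\<in>mp_zeros c. lw (mp_fun c) a) = SM c"
    unfolding SM_def by (simp add: sm_lw)
  finally have 1: "W (mp_fun c) 0 R = of_int (SM c)" .
  have "W (mp_fun c) 0 R = W F 0 R"
  proof (rule W_near)
    fix x :: complex assume "x \<in> sphere 0 R"
    then have "norm x = R" by simp
    then show "norm (mp_fun c x - F x) < norm (F x)" using dom[of x] fsplit[of x] by simp
  qed (use R1 in \<open>auto simp: F_def intro: mp_fun_cont Fh_cont\<close>)
  also have "\<dots> = of_int (fact_index p q gs ks)"
    unfolding F_def using c0 adm R1 by (intro W_Fh) auto
  finally show ?thesis using 1 by simp
qed

lemma part2:
  assumes fin: "finite (mp_supp c)" and hf: "hfactorization c (bot_deg c) c0 p q gs ks"
    and adm: "\<forall>g\<in>set gs. norm g \<noteq> 1"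
  shows "sm c 0 = fact_index p q gs ks"
proof -
  define d where "d = bot_deg c"
  define F where "F = Fh c0 p q gs ks"
  have c0: "c0 \<noteq> 0" using hf by (simp add: hfactorization_def)
  obtain K where K: "K > 0" "\<And>u. norm (F u) \<ge> K * norm u ^ d"
    using Fh_lower[OF hf adm] unfolding F_def d_def by blast
  define M where "M = MM c"
  have M: "M \<ge> 0" unfolding M_def by (rule MM_nonneg)
  define r0 where "r0 = min 1 (K / (M + 1))"
  have r0: "r0 > 0" "r0 \<le> 1" unfolding r0_def using K M by auto
  have fsplit: "mp_fun c u = F u + rest c d u" for u
    using mp_split[OF fin, of u d] hfact_eq[OF hf, of u] unfolding F_def d_def by simp
  have dom: "norm (rest c d u) < norm (F u)" if u: "norm u > 0" "norm u \<le> r0" for u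
  proof -
    let ?r = "norm u"
    have r1: "?r \<le> 1" using u r0 by simp
    have "M * ?r \<le> M * (K / (M + 1))" using u M unfolding r0_def by (intro mult_left_mono) auto
    also have "\<dots> < K" using K M by (simp add: field_simps)
    finally have MK: "M * ?r < K" .
    have pos: "?r ^ d > 0" using u by simp
    have "norm (rest c d u) \<le> M * ?r ^ (d + 1)"
      using rest_bot[OF fin r1] unfolding M_def d_def .
    also have "\<dots> = (M * ?r) * ?r ^ d" by (simp add: mult_ac)
    also have "\<dots> < K * ?r ^ d" using MK pos by (intro mult_strict_right_mono)
    also have "\<dots> \<le> norm (F u)" by (rule K(2))
    finally show ?thesis .
  qed
  have "W (mp_fun c) 0 s = of_int (fact_index p q gs ks)" if s: "0 < s" "s \<le> r0" for s
  proof -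
    have "W (mp_fun c) 0 s = W F 0 s"
    proof (rule W_near)
      fix x :: complex assume "x \<in> sphere 0 s"
      then have "norm x = s" by simp
      then show "norm (mp_fun c x - F x) < norm (F x)" using dom[of x] fsplit[of x] s by simp
    qed (use s in \<open>auto simp: F_def intro: mp_fun_cont Fh_cont\<close>)
    also have "\<dots> = of_int (fact_index p q gs ks)"
      unfolding F_def using c0 adm s by (intro W_Fh) auto
    finally show ?thesis .
  qed
  then have "lw (mp_fun c) 0 = fact_index p q gs ks" using r0 by (intro lw_eqI) auto
  then show ?thesis by (simp add: sm_lw)
qed

theorem theorem12:
  fixes c :: "nat \<Rightarrow> nat \<Rightarrow> complex"
  assumes "finite (mp_supp c)" and "mp_supp c \<noteq> {}"
  shows "(\<forall>c0 p q gs ks. hfactorization c (top_deg c) c0 p q gs ks \<longrightarrow>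
           (\<forall>g\<in>set gs. norm g \<noteq> 1) \<longrightarrow> finite (mp_zeros c) \<longrightarrow>
           SM c = fact_index p q gs ks) \<and>
         (\<forall>c0 a b ds ms. hfactorization c (bot_deg c) c0 a b ds ms \<longrightarrow>
           (\<forall>d\<in>set ds. norm d \<noteq> 1) \<longrightarrow> mp_fun c 0 = 0 \<longrightarrow>
           sm c 0 = fact_index a b ds ms)"
  using part1[OF assms(1)] part2[OF assms(1)] by blast

end
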